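(* Let $f,g$ be invertible $\mathbb F_q$-linearised polynomials over $\mathbb F_{q^h}$ and $m\ge1$. If $(f,g)$ satisfies property $(Prop_m)$, then so do $(f^{-1},f^{-1}\circ g)$ and $(g^{-1},g^{-1}\circ f)$.
   Context: An $\mathbb F_q$-linearised polynomial over $\mathbb F_{q^h}$ is $\sum_{l=0}^{h-1}a_lX^{q^l}$ with $a_l\in\mathbb F_{q^h}$, viewed as a map of $\mathbb F_{q^h}$; invertible means bijective. Identities $\equiv$ mean equality as maps. Property $(Prop_m)$: $(f,g)$ satisfies it if there exist triples $(a_j,b_j,c_j)\in(\mathbb F_{q^h}^* )^3$, $1\le j\le m$, with $(a_1,b_1,c_1)=(1,1,1)$, such that $a_jf(b_jf^{-1}(X))\equiv g(c_jg^{-1}(X))$ for every $j$, and for all $i\ne j$: $a_i\ne a_j$, $b_i\ne b_j$, $c_i\ne c_j$. *)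

theory Defs
  imports "HOL-Number_Theory.Prime_Powers"
begin

text \<open>An F_q-linearised polynomial over F_{q^h} (the field 'a, with CARD('a) = q^h),
  viewed as a map of the field.\<close>
definition linearised :: "nat \<Rightarrow> nat \<Rightarrow> ('a::{field,finite} \<Rightarrow> 'a) \<Rightarrow> bool" where
  "linearised q h f \<longleftrightarrow> (\<exists>a :: nat \<Rightarrow> 'a. f = (\<lambda>x. \<Sum>l<h. a l * x ^ (q ^ l)))"

definition Prop :: "nat \<Rightarrow> ('a::field \<Rightarrow> 'a) \<Rightarrow> ('a \<Rightarrow> 'a) \<Rightarrow> bool" where
  "Prop m f g \<longleftrightarrow>
    (\<exists>a b c :: nat \<Rightarrow> 'a.
       (\<forall>j\<in>{1..m}. a j \<noteq> 0 \<and> b j \<noteq> 0 \<and> c j \<noteq> 0) \<and>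
       a 1 = 1 \<and> b 1 = 1 \<and> c 1 = 1 \<and>
       (\<forall>j\<in>{1..m}. \<forall>x. a j * f (b j * inv f x) = g (c j * inv g x)) \<and>
       (\<forall>i\<in>{1..m}. \<forall>j\<in>{1..m}. i \<noteq> j \<longrightarrow> a i \<noteq> a j \<and> b i \<noteq> b j \<and> c i \<noteq> c j))"

end

theory Submission
  imports Defs
begin

lemma step1:
  fixes f g :: "'a::field \<Rightarrow> 'a"
  assumes bf: "bij f" and bg: "bij g" and a: "a \<noteq> 0" and b: "b \<noteq> 0" and c: "c \<noteq> 0"
    and H: "\<And>y. a * f (b * inv f y) = g (c * inv g y)"
  shows "inverse b * inv f (inverse a * inv (inv f) x) = (inv f \<circ> g) (inverse c * inv (inv f \<circ> g) x)"
proof -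
  have iif: "inv (inv f) = f" using bf by (simp add: inv_inv_eq)
  have bif: "bij (inv f)" using bf by (simp add: bij_imp_bij_inv)
  have io: "inv (inv f \<circ> g) = inv g \<circ> inv (inv f)" using bif bg by (simp add: o_inv_distrib)
  define t where "t = inverse c * inv g (f x)"
  have ct: "c * t = inv g (f x)" using c unfolding t_def by (simp add: mult.assoc[symmetric])
  have gct: "g (c * t) = f x" unfolding ct using bg by (simp add: bij_is_surj surj_f_inv_f)
  have "a * f (b * inv f (g t)) = f x"
    using H[of "g t"] bg gct by (simp add: bij_is_inj inv_f_f)
  hence "f (b * inv f (g t)) = inverse a * f x" using a by (simp add: field_simps)
  hence "b * inv f (g t) = inv f (inverse a * f x)" using bf by (metis bij_inv_eq_iff)
  hence "inv f (g t) = inverse b * inv f (inverse a * f x)" using b by (simp add: field_simps)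
  thus ?thesis unfolding io iif t_def by simp
qed

lemma propinv:
  fixes f g :: "'a::field \<Rightarrow> 'a"
  assumes bf: "bij f" and bg: "bij g" and P: "Prop m f g"
  shows "Prop m (inv f) (inv f \<circ> g)"
proof -
  obtain a b c :: "nat \<Rightarrow> 'a" where
    nz: "\<forall>j\<in>{1..m}. a j \<noteq> 0 \<and> b j \<noteq> 0 \<and> c j \<noteq> 0" and
    one: "a 1 = 1" "b 1 = 1" "c 1 = 1" and
    eq: "\<forall>j\<in>{1..m}. \<forall>x. a j * f (b j * inv f x) = g (c j * inv g x)" and
    dist: "\<forall>i\<in>{1..m}. \<forall>j\<in>{1..m}. i \<noteq> j \<longrightarrow> a i \<noteq> a j \<and> b i \<noteq> b j \<and> c i \<noteq> c j"
    using P unfolding Prop_def by blast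
  show ?thesis unfolding Prop_def
  proof (rule exI[of _ "\<lambda>j. inverse (b j)"], rule exI[of _ "\<lambda>j. inverse (a j)"], rule exI[of _ "\<lambda>j. inverse (c j)"], intro conjI)
    show "\<forall>j\<in>{1..m}. \<forall>x. inverse (b j) * inv f (inverse (a j) * inv (inv f) x) =
          (inv f \<circ> g) (inverse (c j) * inv (inv f \<circ> g) x)"
    proof (intro ballI allI)
      fix j x assume j: "j \<in> {1..m}"
      have nzj: "a j \<noteq> 0" "b j \<noteq> 0" "c j \<noteq> 0" using nz j by auto
      have "\<And>y. a j * f (b j * inv f y) = g (c j * inv g y)" using eq j by blast
      from step1[OF bf bg nzj this]
      show "inverse (b j) * inv f (inverse (a j) * inv (inv f) x) =
          (inv f \<circ> g) (inverse (c j) * inv (inv f \<circ> g) x)" .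
    qed
  next
    show "\<forall>i\<in>{1..m}. \<forall>j\<in>{1..m}. i \<noteq> j \<longrightarrow> inverse (b i) \<noteq> inverse (b j) \<and> inverse (a i) \<noteq> inverse (a j) \<and> inverse (c i) \<noteq> inverse (c j)"
      using dist by simp
  qed (use nz one in auto)
qed

lemma propswap:
  fixes f g :: "'a::field \<Rightarrow> 'a"
  assumes P: "Prop m f g"
  shows "Prop m g f"
proof -
  obtain a b c :: "nat \<Rightarrow> 'a" where
    nz: "\<forall>j\<in>{1..m}. a j \<noteq> 0 \<and> b j \<noteq> 0 \<and> c j \<noteq> 0" and
    one: "a 1 = 1" "b 1 = 1" "c 1 = 1" and
    eq: "\<forall>j\<in>{1..m}. \<forall>x. a j * f (b j * inv f x) = g (c j * inv g x)" and
    dist: "\<forall>i\<in>{1..m}. \<forall>j\<in>{1..m}. i \<noteq> j \<longrightarrow> a i \<noteq> a j \<and> b i \<noteq> b j \<and> c i \<noteq> c j"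
    using P unfolding Prop_def by blast
  show ?thesis unfolding Prop_def
  proof (rule exI[of _ "\<lambda>j. inverse (a j)"], rule exI[of _ c], rule exI[of _ b], intro conjI)
    show "\<forall>j\<in>{1..m}. \<forall>x. inverse (a j) * g (c j * inv g x) = f (b j * inv f x)"
    proof (intro ballI allI)
      fix j x assume j: "j \<in> {1..m}"
      have "a j * f (b j * inv f x) = g (c j * inv g x)" using eq j by blast
      thus "inverse (a j) * g (c j * inv g x) = f (b j * inv f x)" using nz j
        by (metis left_inverse mult.assoc mult_1)
    qed
  next
    show "\<forall>i\<in>{1..m}. \<forall>j\<in>{1..m}. i \<noteq> j \<longrightarrow> inverse (a i) \<noteq> inverse (a j) \<and> c i \<noteq> c j \<and> b i \<noteq> b j"
      using dist by simp
  qed (use nz one in auto)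
qed

theorem lemma5p13:
  fixes q h m :: nat and f g :: "'a::{field,finite} \<Rightarrow> 'a"
  assumes "primepow q" and "card (UNIV :: 'a set) = q ^ h"
    and "linearised q h f" and "bij f"
    and "linearised q h g" and "bij g"
    and "m \<ge> 1"
    and "Prop m f g"
  shows "Prop m (inv f) (inv f \<circ> g) \<and> Prop m (inv g) (inv g \<circ> f)"
  using propinv[OF assms(4,6,8)] propinv[OF assms(6,4) propswap[OF assms(8)]] by blast

end
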